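(* Let $G$ be a non-trivial graph with $m$ edges and maximum degree $\Delta$, and let $\mathcal{L}(G)$ be its line graph. Then $$ GA_1(G) + GA_1(\mathcal{L}(G)) \le \frac{1}{2}\, \max \big\{2\Delta^2 +m^2 +(6-2\Delta) m - 2\Delta -4\,,\; 2\Delta^2 +m^2 +(4-2\Delta) m + 4 \,,\; m(m-1) \big\} . $$
   Context: All graphs are finite and simple. A graph is non-trivial if each of its connected components has at least two edges. $d_u$ is the degree of $u$. The geometric-arithmetic index is $GA_1(G)=\sum_{uv\in E(G)}\frac{\sqrt{d_ud_v}}{\frac12(d_u+d_v)}$. The line graph $\mathcal{L}(G)$ has vertex set $E(G)$, two vertices being adjacent iff the corresponding edges share an end vertex in $G$. *)

theory Defs
  imports Complex_Main
begin

definition simple_graph :: "'a set \<Rightarrow> 'a set set \<Rightarrow> bool" where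
  "simple_graph V E \<longleftrightarrow> finite V \<and>
     (\<forall>e\<in>E. \<exists>u v. e = {u, v} \<and> u \<noteq> v \<and> u \<in> V \<and> v \<in> V)"

definition degree :: "'a set set \<Rightarrow> 'a \<Rightarrow> nat" where
  "degree E u = card {e \<in> E. u \<in> e}"

definition max_degree :: "'a set \<Rightarrow> 'a set set \<Rightarrow> nat" where
  "max_degree V E = Max (degree E ` V)"

definition adj :: "'a set set \<Rightarrow> 'a \<Rightarrow> 'a \<Rightarrow> bool" where
  "adj E u v \<longleftrightarrow> {u, v} \<in> E"

definition component_edges :: "'a set set \<Rightarrow> 'a \<Rightarrow> 'a set set" where
  "component_edges E v = {e \<in> E. \<forall>u\<in>e. (adj E)\<^sup>*\<^sup>* v u}"

definition nontrivial_graph :: "'a set \<Rightarrow> 'a set set \<Rightarrow> bool" where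
  "nontrivial_graph V E \<longleftrightarrow> (\<forall>v\<in>V. card (component_edges E v) \<ge> 2)"

text \<open>GA_1: for an edge e = {u,v}, the product over e is d_u d_v and the sum is d_u + d_v.\<close>
definition GA1 :: "'a set set \<Rightarrow> real" where
  "GA1 E = (\<Sum>e\<in>E. sqrt (real (\<Prod>u\<in>e. degree E u)) / ((1/2) * real (\<Sum>u\<in>e. degree E u)))"

definition line_graph_edges :: "'a set set \<Rightarrow> 'a set set set" where
  "line_graph_edges E = {{e, f} | e f. e \<in> E \<and> f \<in> E \<and> e \<noteq> f \<and> e \<inter> f \<noteq> {}}"

end

theory Submission
  imports Defs
begin

lemma GA1_le_card:
  assumes fin: "finite F" and two: "\<forall>e\<in>F. \<exists>a b. e = {a,b} \<and> a \<noteq> b"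
  shows "GA1 F \<le> real (card F)"
proof -
  have "GA1 F \<le> (\<Sum>e\<in>F. 1)"
    unfolding GA1_def
  proof (rule sum_mono)
    fix e assume "e \<in> F"
    then obtain a b where e: "e = {a,b}" "a \<noteq> b" using two by blast
    define x where "x = real (degree F a)"
    define y where "y = real (degree F b)"
    have p: "real (\<Prod>u\<in>e. degree F u) = x * y" using e by (simp add: x_def y_def)
    have s: "real (\<Sum>u\<in>e. degree F u) = x + y" using e by (simp add: x_def y_def)
    have x0: "x \<ge> 0" "y \<ge> 0" by (auto simp: x_def y_def)
    have g: "sqrt (x*y) \<le> (x+y)/2" using arith_geo_mean_sqrt x0 by blast
    have h: "sqrt (x*y) / ((1/2) * (x+y)) \<le> 1"
    proof (cases "x + y = 0")
      case True then show ?thesis by simp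
    next
      case False
      then have "x + y > 0" using x0 by linarith
      then show ?thesis using g by (simp add: divide_le_eq)
    qed
    show "sqrt (real (\<Prod>u\<in>e. degree F u)) / ((1/2) * real (\<Sum>u\<in>e. degree F u)) \<le> 1"
      using h by (simp only: p s)
  qed
  then show ?thesis by simp
qed

lemma card_pairs:
  assumes "finite A"
  shows "card {{e, f} | e f. e \<in> A \<and> f \<in> A \<and> e \<noteq> f} = card A choose 2"
proof -
  have "{{e, f} | e f. e \<in> A \<and> f \<in> A \<and> e \<noteq> f} = {B. B \<subseteq> A \<and> card B = 2}"
  proof (rule set_eqI, rule iffI)
    fix B assume "B \<in> {{e, f} | e f. e \<in> A \<and> f \<in> A \<and> e \<noteq> f}"
    then obtain e f where "B = {e,f}" "e \<in> A" "f \<in> A" "e \<noteq> f" by blast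
    then show "B \<in> {B. B \<subseteq> A \<and> card B = 2}" by simp
  next
    fix B assume "B \<in> {B. B \<subseteq> A \<and> card B = 2}"
    then have "B \<subseteq> A" "card B = 2" by auto
    then obtain e f where "B = {e,f}" "e \<noteq> f" by (meson card_2_iff)
    then show "B \<in> {{e, f} | e f. e \<in> A \<and> f \<in> A \<and> e \<noteq> f}"
      using \<open>B \<subseteq> A\<close> by blast
  qed
  then show ?thesis using n_subsets[OF assms] by simp
qed

lemma line_card_bound:
  assumes fin: "finite E" and w: "card {e\<in>E. w \<in> e} = D"
    and two: "\<forall>e\<in>E. \<exists>a b. e = {a,b} \<and> a \<noteq> b"
  shows "card (line_graph_edges E) \<le> (D choose 2) + ((card E - D) choose 2) + 2 * (card E - D)"
proof -
  define W where "W = {e\<in>E. w \<in> e}"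
  define R where "R = E - W"
  have WE: "W \<subseteq> E" unfolding W_def by blast
  have finW: "finite W" "finite R" using finite_subset[OF WE fin] fin unfolding R_def by simp_all
  have cW: "card W = D" using w unfolding W_def .
  have cR: "card R = card E - D" unfolding R_def using card_Diff_subset[OF finW(1) WE] cW by simp
  define L1 where "L1 = {{e, f} | e f. e \<in> W \<and> f \<in> W \<and> e \<noteq> f}"
  define L2 where "L2 = {{e, f} | e f. e \<in> R \<and> f \<in> R \<and> e \<noteq> f}"
  define S where "S = (\<lambda>f. (\<lambda>e. {e, f}) ` {e \<in> W. e \<inter> f \<noteq> {}})"
  have sub: "line_graph_edges E \<subseteq> L1 \<union> L2 \<union> (\<Union>f\<in>R. S f)"
  proof
    fix x assume "x \<in> line_graph_edges E"
    then obtain e f where x: "x = {e,f}" "e \<in> E" "f \<in> E" "e \<noteq> f" "e \<inter> f \<noteq> {}"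
      unfolding line_graph_edges_def by blast
    show "x \<in> L1 \<union> L2 \<union> (\<Union>f\<in>R. S f)"
    proof (cases "e \<in> W")
      case eW: True
      show ?thesis
      proof (cases "f \<in> W")
        case True then show ?thesis using eW x unfolding L1_def by blast
      next
        case False then have "f \<in> R" using x unfolding R_def by blast
        moreover have "x \<in> S f" unfolding S_def x(1)
          by (rule image_eqI[where x=e]) (use eW x in auto)
        ultimately show ?thesis by blast
      qed
    next
      case eW: False
      then have eR: "e \<in> R" using x unfolding R_def by blast
      show ?thesis
      proof (cases "f \<in> W")
        case True
        have "x = {f, e}" using x by blast
        moreover have "{f, e} \<in> S e" unfolding S_def
          by (rule image_eqI[where x=f]) (use True x in auto)
        ultimately show ?thesis using eR by blast
      next
        case False then have "f \<in> R" using x unfolding R_def by blast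
        then show ?thesis using eR x unfolding L2_def by blast
      qed
    qed
  qed
  have cS: "card (S f) \<le> 2" if "f \<in> R" for f
  proof -
    have fE: "f \<in> E" "f \<notin> W" using that unfolding R_def by simp_all
    obtain a b where ab: "f = {a,b}" "a \<noteq> b" using two fE(1) by meson
    have wf: "w \<notin> f" using fE unfolding W_def by simp
    have "S f \<subseteq> (\<lambda>e. {e, f}) ` {{w,a},{w,b}}"
    proof
      fix x assume "x \<in> S f"
      then obtain e where e: "x = {e,f}" "e \<in> W" "e \<inter> f \<noteq> {}" unfolding S_def by (auto elim!: imageE)
      have eE: "e \<in> E" "w \<in> e" using e(2) unfolding W_def by simp_all
      obtain c d where cd: "e = {c,d}" "c \<noteq> d" using two eE(1) by meson
      have "w \<in> e" using eE by simp
      then have "e = {w,a} \<or> e = {w,b}" using cd e(3) ab wf by auto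
      then show "x \<in> (\<lambda>e. {e, f}) ` {{w,a},{w,b}}" using e(1) by blast
    qed
    then have "card (S f) \<le> card ((\<lambda>e. {e, f}) ` {{w,a},{w,b}})"
      by (intro card_mono) auto
    also have "\<dots> \<le> card {{w,a},{w,b}}" by (rule card_image_le) simp
    also have "\<dots> \<le> 2" by (simp add: card_insert_if)
    finally show ?thesis .
  qed
  have finS: "finite (S f)" if "f \<in> R" for f
    unfolding S_def using finW(1) by simp
  have fin1: "finite L1" "finite L2"
  proof -
    have "L1 \<subseteq> (\<lambda>(e,f). {e,f}) ` (W \<times> W)" unfolding L1_def by auto
    then show "finite L1" using finW by (meson finite_SigmaI finite_imageI finite_subset)
    have "L2 \<subseteq> (\<lambda>(e,f). {e,f}) ` (R \<times> R)" unfolding L2_def by auto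
    then show "finite L2" using finW by (meson finite_SigmaI finite_imageI finite_subset)
  qed
  have finU: "finite (L1 \<union> L2 \<union> (\<Union>f\<in>R. S f))" using fin1 finS finW by simp
  have c1: "card (line_graph_edges E) \<le> card (L1 \<union> L2 \<union> (\<Union>f\<in>R. S f))"
    by (rule card_mono[OF finU sub])
  have c2: "card (L1 \<union> L2 \<union> (\<Union>f\<in>R. S f)) \<le> card (L1 \<union> L2) + card (\<Union>f\<in>R. S f)"
    by (rule card_Un_le)
  have c3: "card (L1 \<union> L2) \<le> card L1 + card L2" by (rule card_Un_le)
  have c4: "card (\<Union>f\<in>R. S f) \<le> (\<Sum>f\<in>R. card (S f))" by (rule card_UN_le) (rule finW)
  have c5: "(\<Sum>f\<in>R. card (S f)) \<le> (\<Sum>f\<in>R. 2)" using cS by (intro sum_mono) auto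
  have c6: "(\<Sum>f\<in>R. (2::nat)) = 2 * (card E - D)" using cR by simp
  have c7: "card L1 = D choose 2" using card_pairs[OF finW(1)] w unfolding L1_def W_def by simp
  have c8: "card L2 = (card E - D) choose 2" using card_pairs[OF finW(2)] cR unfolding L2_def by simp
  show ?thesis using c1 c2 c3 c4 c5 c6 c7 c8 by linarith
qed

theorem corollary2p2:
  fixes V :: "'a set" and E :: "'a set set"
  assumes "simple_graph V E"
    and "nontrivial_graph V E"
  shows "GA1 E + GA1 (line_graph_edges E) \<le>
    (1/2) * Max {2 * real (max_degree V E) ^ 2 + real (card E) ^ 2
                   + (6 - 2 * real (max_degree V E)) * real (card E) - 2 * real (max_degree V E) - 4,
                 2 * real (max_degree V E) ^ 2 + real (card E) ^ 2
                   + (4 - 2 * real (max_degree V E)) * real (card E) + 4,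
                 real (card E) * (real (card E) - 1)}"
  (is "_ \<le> (1/2) * Max {?T1, ?T2, ?T3}")
proof -
  have finV: "finite V" and Ev: "\<forall>e\<in>E. \<exists>u v. e = {u, v} \<and> u \<noteq> v \<and> u \<in> V \<and> v \<in> V"
    using assms(1) unfolding simple_graph_def by simp_all
  have EPow: "E \<subseteq> Pow V"
  proof
    fix e assume "e \<in> E"
    then obtain u v where "e = {u, v}" "u \<in> V" "v \<in> V" using Ev by meson
    then show "e \<in> Pow V" by simp
  qed
  have finE: "finite E" using finite_subset[OF EPow] finV by blast
  have two: "\<forall>e\<in>E. \<exists>a b. e = {a,b} \<and> a \<noteq> b" using Ev by meson
  have finL: "finite (line_graph_edges E)"
  proof -
    have "line_graph_edges E \<subseteq> (\<lambda>(e,f). {e,f}) ` (E \<times> E)" unfolding line_graph_edges_def by auto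
    then show ?thesis using finE by (meson finite_SigmaI finite_imageI finite_subset)
  qed
  have twoL: "\<forall>x\<in>line_graph_edges E. \<exists>a b. x = {a,b} \<and> a \<noteq> b"
    unfolding line_graph_edges_def by blast
  have g1: "GA1 E \<le> real (card E)" by (rule GA1_le_card[OF finE two])
  have g2: "GA1 (line_graph_edges E) \<le> real (card (line_graph_edges E))"
    by (rule GA1_le_card[OF finL twoL])
  have M3: "?T3 \<le> Max {?T1, ?T2, ?T3}" by (intro Max_ge) auto
  have M1: "?T1 \<le> Max {?T1, ?T2, ?T3}" by (intro Max_ge) auto
  show ?thesis
  proof (cases "V = {}")
    case True
    have "E = {}"
    proof (rule ccontr)
      assume "E \<noteq> {}"
      then obtain e where "e \<in> E" by blast
      then obtain u v where "u \<in> V" using Ev by meson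
      then show False using True by simp
    qed
    then have "line_graph_edges E = {}" unfolding line_graph_edges_def by auto
    then show ?thesis using M3 \<open>E = {}\<close> by (simp add: GA1_def)
  next
    case False
    then obtain v where v: "v \<in> V" by blast
    have "2 \<le> card (component_edges E v)" using assms(2) v unfolding nontrivial_graph_def by blast
    also have "\<dots> \<le> card E" using finE by (intro card_mono) (auto simp: component_edges_def)
    finally have m2: "2 \<le> card E" .
    then have "E \<noteq> {}" by auto
    then obtain e where "e \<in> E" by blast
    then obtain a b where ab: "e = {a,b}" "a \<in> V" using Ev by blast
    have "0 < degree E a" unfolding degree_def using finE \<open>e \<in> E\<close> ab
      by (subst card_gt_0_iff) auto
    also have "degree E a \<le> max_degree V E" unfolding max_degree_def
      using finV ab by (intro Max_ge) auto
    finally have D1: "1 \<le> max_degree V E" by simp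
    obtain w where w: "w \<in> V" "degree E w = max_degree V E"
      unfolding max_degree_def using Max_in[of "degree E ` V"] finV False by fastforce
    define D where "D = max_degree V E"
    define m where "m = card E"
    have cw: "card {e\<in>E. w \<in> e} = D" using w unfolding degree_def D_def by simp
    have Dm: "D \<le> m" unfolding m_def using cw[symmetric] finE by (simp add: card_mono)
    have Lb: "card (line_graph_edges E) \<le> (D choose 2) + ((m - D) choose 2) + 2 * (m - D)"
      using line_card_bound[OF finE cw two] unfolding m_def .
    define d where "d = m - D"
    have md: "m = D + d" using Dm d_def by simp
    have ch: "real (n choose 2) = real n * (real n - 1) / 2" for n :: nat
    proof -
      have "2 * real (n choose 2) = real n * (real n - 1)"
      proof (induction n)
        case 0 then show ?case by simp
      next
        case (Suc k)
        have "Suc k choose 2 = k + (k choose 2)"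
          by (simp add: numeral_2_eq_2)
        then show ?case using Suc.IH by (simp add: algebra_simps)
      qed
      then show ?thesis by simp
    qed
    have "real (card (line_graph_edges E)) \<le> real D * (real D - 1) / 2 + real d * (real d - 1) / 2 + 2 * real d"
      using Lb unfolding d_def[symmetric] ch[symmetric] by (metis of_nat_add of_nat_le_iff of_nat_mult of_nat_numeral)
    moreover have "real m + (real D * (real D - 1) / 2 + real d * (real d - 1) / 2 + 2 * real d) \<le> (1/2) * ?T1"
    proof -
      have r: "1 \<le> real D" "2 \<le> real D + real d" "real m = real D + real d"
        using md m2 D1 unfolding m_def[symmetric] D_def[symmetric] by simp_all
      show ?thesis unfolding D_def[symmetric] m_def[symmetric] r(3)
        apply (simp add: algebra_simps power2_eq_square diff_divide_distrib)
        using r by linarith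
    qed
    moreover have "(1/2) * ?T1 \<le> (1/2) * Max {?T1, ?T2, ?T3}" by (rule mult_left_mono[OF M1]) simp
    ultimately have "real (card E) + real (card (line_graph_edges E)) \<le> (1/2) * Max {?T1, ?T2, ?T3}"
      unfolding m_def by linarith
    then show ?thesis using g1 g2 by linarith
  qed
qed

end
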